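(* For every integer $n\ge 8$, the disjunctive domination number of the torus grid graph $C_8\Box C_n$ satisfies $$n\le \gamma_2^d(C_8\Box C_n)\le\begin{cases} n+1, & n\equiv 1 \text{ or } 3\pmod 4,\\ n+2, & n\equiv 2\pmod 4.\end{cases}$$ Moreover, if $n\equiv 0\pmod 4$, then $\gamma_2^d(C_8\Box C_n)=n$.
   Context: $C_k$ denotes the cycle on $k$ vertices, and $G\Box H$ is the Cartesian product: vertex set $V(G)\times V(H)$, with $(g,h)\sim(g',h')$ iff either $g=g'$ and $hh'\in E(H)$, or $h=h'$ and $gg'\in E(G)$. For a simple graph $\Gamma$ and a vertex $v$, let $\Gamma(v)$ be the set of vertices at distance $1$ from $v$ and $\Gamma_2(v)$ the set of vertices at distance exactly $2$ from $v$. A set $S\subseteq V(\Gamma)$ is a disjunctive dominating set if every vertex $v\notin S$ satisfies $|\Gamma(v)\cap S|\ge 1$ or $|\Gamma_2(v)\cap S|\ge 2$. The disjunctive domination number $\gamma_2^d(\Gamma)$ is the minimum cardinality of a disjunctive dominating set of $\Gamma$. *)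

theory Defs
  imports Main
begin

text \<open>A simple graph is given by a vertex set V and a symmetric irreflexive
adjacency relation E (only its restriction to V matters).\<close>

inductive walk :: "('a \<Rightarrow> 'a \<Rightarrow> bool) \<Rightarrow> 'a set \<Rightarrow> 'a \<Rightarrow> 'a \<Rightarrow> nat \<Rightarrow> bool"
  for E V where
  walk0: "u \<in> V \<Longrightarrow> walk E V u u 0"
| walkS: "u \<in> V \<Longrightarrow> E u w \<Longrightarrow> walk E V w v k \<Longrightarrow> walk E V u v (Suc k)"

text \<open>Graph distance: length of a shortest walk (only meaningful when one exists).\<close>
definition gdist :: "('a \<Rightarrow> 'a \<Rightarrow> bool) \<Rightarrow> 'a set \<Rightarrow> 'a \<Rightarrow> 'a \<Rightarrow> nat" where
  "gdist E V u v = (LEAST k. walk E V u v k)"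

definition sphere :: "('a \<Rightarrow> 'a \<Rightarrow> bool) \<Rightarrow> 'a set \<Rightarrow> 'a \<Rightarrow> nat \<Rightarrow> 'a set" where
  "sphere E V v d = {u \<in> V. (\<exists>k. walk E V v u k) \<and> gdist E V v u = d}"

definition disj_dom_set :: "('a \<Rightarrow> 'a \<Rightarrow> bool) \<Rightarrow> 'a set \<Rightarrow> 'a set \<Rightarrow> bool" where
  "disj_dom_set E V S \<longleftrightarrow> S \<subseteq> V \<and>
     (\<forall>v \<in> V - S. card (sphere E V v 1 \<inter> S) \<ge> 1 \<or> card (sphere E V v 2 \<inter> S) \<ge> 2)"

definition disj_dom_num :: "('a \<Rightarrow> 'a \<Rightarrow> bool) \<Rightarrow> 'a set \<Rightarrow> nat" where
  "disj_dom_num E V = (LEAST k. \<exists>S. disj_dom_set E V S \<and> card S = k)"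

definition cycle_adj :: "nat \<Rightarrow> nat \<Rightarrow> nat \<Rightarrow> bool" where
  "cycle_adj k i j \<longleftrightarrow> i < k \<and> j < k \<and> (j = (i + 1) mod k \<or> i = (j + 1) mod k)"

definition cart_adj :: "('a \<Rightarrow> 'a \<Rightarrow> bool) \<Rightarrow> ('b \<Rightarrow> 'b \<Rightarrow> bool) \<Rightarrow> 'a \<times> 'b \<Rightarrow> 'a \<times> 'b \<Rightarrow> bool" where
  "cart_adj EG EH p q \<longleftrightarrow>
     (fst p = fst q \<and> EH (snd p) (snd q)) \<or> (snd p = snd q \<and> EG (fst p) (fst q))"

definition torus_adj :: "nat \<Rightarrow> nat \<Rightarrow> nat \<times> nat \<Rightarrow> nat \<times> nat \<Rightarrow> bool" where
  "torus_adj m n = cart_adj (cycle_adj m) (cycle_adj n)"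

definition torus_V :: "nat \<Rightarrow> nat \<Rightarrow> (nat \<times> nat) set" where
  "torus_V m n = {0..<m} \<times> {0..<n}"

end

theory Submission
  imports Defs
begin

lemma walk0_iff: "walk E V u v 0 \<longleftrightarrow> u \<in> V \<and> u = v"
  by (auto elim: walk.cases intro: walk.intros)

lemma walkS_iff: "walk E V u v (Suc k) \<longleftrightarrow> u \<in> V \<and> (\<exists>w. E u w \<and> walk E V w v k)"
  by (auto elim: walk.cases intro: walk.intros)

lemma walk1_iff: "walk E V u v 1 \<longleftrightarrow> u \<in> V \<and> E u v \<and> v \<in> V"
  by (simp add: walkS_iff walk0_iff)

lemma walk1_iff': "walk E V u v (Suc 0) \<longleftrightarrow> u \<in> V \<and> E u v \<and> v \<in> V"
  by (simp add: walkS_iff walk0_iff)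

lemma walk2_iff: "walk E V u v 2 \<longleftrightarrow> u \<in> V \<and> (\<exists>w. E u w \<and> w \<in> V \<and> E w v \<and> v \<in> V)"
  by (simp add: numeral_2_eq_2 walkS_iff walk0_iff)

lemma gdist_eqI: "walk E V u v d \<Longrightarrow> (\<And>k. k < d \<Longrightarrow> \<not> walk E V u v k) \<Longrightarrow> gdist E V u v = d"
  unfolding gdist_def by (rule Least_equality) (auto simp: not_less[symmetric])

lemma gdist_walk: "walk E V u v k \<Longrightarrow> walk E V u v (gdist E V u v)"
  unfolding gdist_def by (rule LeastI)

lemma gdist_le: "walk E V u v k \<Longrightarrow> gdist E V u v \<le> k"
  unfolding gdist_def by (rule Least_le)

lemma sphere1_D: "u \<in> sphere E V v 1 \<Longrightarrow> E v u \<and> v \<in> V \<and> u \<in> V"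
proof -
  assume "u \<in> sphere E V v 1"
  then obtain k where "walk E V v u k" "gdist E V v u = 1" unfolding sphere_def by blast
  then have "walk E V v u 1" using gdist_walk by fastforce
  thus ?thesis by (simp add: walk1_iff')
qed

lemma sphere2_D: "u \<in> sphere E V v 2 \<Longrightarrow> walk E V v u 2 \<and> u \<noteq> v"
proof -
  assume "u \<in> sphere E V v 2"
  then obtain k where k: "walk E V v u k" "gdist E V v u = 2" "u \<in> V" unfolding sphere_def by blast
  then have w: "walk E V v u 2" using gdist_walk by fastforce
  have "u \<noteq> v"
  proof
    assume "u = v"
    then have "walk E V v u 0" using k(3) by (simp add: walk0_iff)
    then have "gdist E V v u \<le> 0" by (rule gdist_le)
    thus False using k(2) by simp
  qed
  thus ?thesis using w by simp
qed

lemma sphere1_I: "E v u \<Longrightarrow> v \<in> V \<Longrightarrow> u \<in> V \<Longrightarrow> u \<noteq> v \<Longrightarrow> u \<in> sphere E V v 1"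
proof -
  assume a: "E v u" "v \<in> V" "u \<in> V" "u \<noteq> v"
  have w: "walk E V v u 1" using a by (simp add: walk1_iff')
  have "gdist E V v u = 1"
    by (rule gdist_eqI[OF w]) (use a in \<open>auto simp: walk0_iff\<close>)
  moreover have "\<exists>k. walk E V v u k" using w by blast
  ultimately show ?thesis unfolding sphere_def using a(3) by simp
qed

lemma sphere2_I: "walk E V v u 2 \<Longrightarrow> u \<noteq> v \<Longrightarrow> \<not> E v u \<Longrightarrow> u \<in> sphere E V v 2"
proof -
  assume a: "walk E V v u 2" "u \<noteq> v" "\<not> E v u"
  have uV: "u \<in> V" using a(1) by (auto simp add: walk2_iff)
  have g: "gdist E V v u = 2"
  proof (rule gdist_eqI[OF a(1)])
    fix k :: nat assume "k < 2"
    then have "k = 0 \<or> k = 1" by auto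
    then show "\<not> walk E V v u k"
    proof
      assume "k = 0" thus ?thesis using a(2) by (simp add: walk0_iff)
    next
      assume "k = 1" thus ?thesis using a(3) by (simp add: walk1_iff')
    qed
  qed
  have ex: "\<exists>k. walk E V v u k" using a(1) by (rule exI)
  show ?thesis unfolding sphere_def by (rule CollectI) (intro conjI uV g ex)
qed


definition nx :: "nat \<Rightarrow> nat \<Rightarrow> nat" where "nx n j = (j + 1) mod n"
definition pv :: "nat \<Rightarrow> nat \<Rightarrow> nat" where "pv n j = (j + n - 1) mod n"
definition nx2 :: "nat \<Rightarrow> nat \<Rightarrow> nat" where "nx2 n j = (j + 2) mod n"
definition pv2 :: "nat \<Rightarrow> nat \<Rightarrow> nat" where "pv2 n j = (j + n - 2) mod n"

lemma nx_if: "j < n \<Longrightarrow> nx n j = (if j + 1 < n then j + 1 else 0)"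
  unfolding nx_def by (auto simp: not_less) (metis Suc_eq_plus1 le_antisym mod_self Suc_leI)

lemma pv_if: "j < n \<Longrightarrow> nx n j = nx n j \<Longrightarrow> pv n j = (if j = 0 then n - 1 else j - 1)"
proof -
  assume j: "j < n"
  show ?thesis
  proof (cases "j = 0")
    case True thus ?thesis using j by (simp add: pv_def)
  next
    case False
    then have "j + n - 1 = (j - 1) + n" by simp
    then have "(j + n - 1) mod n = (j - 1) mod n" by simp
    thus ?thesis using False j by (simp add: pv_def)
  qed
qed

lemma nx2_if: "j < n \<Longrightarrow> 2 \<le> n \<Longrightarrow> nx2 n j = (if j + 2 < n then j + 2 else j + 2 - n)"
proof -
  assume j: "j < n" "2 \<le> n"
  show ?thesis
  proof (cases "j + 2 < n")
    case True thus ?thesis by (simp add: nx2_def)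
  next
    case False
    then have "j + 2 = (j + 2 - n) + n" by simp
    then have "(j + 2) mod n = (j + 2 - n) mod n" by (metis mod_add_self2)
    thus ?thesis using False j by (simp add: nx2_def)
  qed
qed

lemma pv2_if: "j < n \<Longrightarrow> 2 \<le> n \<Longrightarrow> pv2 n j = (if 2 \<le> j then j - 2 else j + n - 2)"
proof -
  assume j: "j < n" "2 \<le> n"
  show ?thesis
  proof (cases "2 \<le> j")
    case True
    then have "j + n - 2 = (j - 2) + n" by simp
    then have "(j + n - 2) mod n = (j - 2) mod n" by simp
    thus ?thesis using True j by (simp add: pv2_def)
  next
    case False thus ?thesis using j by (simp add: pv2_def)
  qed
qed

lemmas cyc_if = nx_if pv_if[OF _ refl] nx2_if pv2_if

lemma cyc_lt: "0 < n \<Longrightarrow> nx n j < n" "0 < n \<Longrightarrow> pv n j < n" "0 < n \<Longrightarrow> nx2 n j < n" "0 < n \<Longrightarrow> pv2 n j < n"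
  by (simp_all add: nx_def pv_def nx2_def pv2_def)

lemma cyc_comp1: "j < n \<Longrightarrow> 5 \<le> n \<Longrightarrow> nx n (nx n j) = nx2 n j"
  by (cases "j + 1 < n") (auto simp: cyc_if)
lemma cyc_comp2: "j < n \<Longrightarrow> 5 \<le> n \<Longrightarrow> pv n (nx n j) = j"
  by (cases "j + 1 < n") (auto simp: cyc_if)
lemma cyc_comp3: "j < n \<Longrightarrow> 5 \<le> n \<Longrightarrow> nx n (pv n j) = j"
  by (cases "j = 0") (auto simp: cyc_if)
lemma cyc_comp4: "j < n \<Longrightarrow> 5 \<le> n \<Longrightarrow> pv n (pv n j) = pv2 n j"
  by (cases "j = 0"; cases "j = 1") (auto simp: cyc_if)
lemmas cyc_comp = cyc_comp1 cyc_comp2 cyc_comp3 cyc_comp4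

lemma cycle_adj_iff: "a < k \<Longrightarrow> 5 \<le> k \<Longrightarrow> cycle_adj k a b \<longleftrightarrow> b = nx k a \<or> b = pv k a"
proof -
  assume a: "a < k" "5 \<le> k"
  have "cycle_adj k a b \<longleftrightarrow> b < k \<and> (b = nx k a \<or> a = nx k b)"
    unfolding cycle_adj_def nx_def using a by auto
  also have "\<dots> \<longleftrightarrow> b = nx k a \<or> b = pv k a"
    using a cyc_lt[of k a] cyc_lt[of k b] by (auto simp: cyc_if split: if_splits)
  finally show ?thesis .
qed

definition N1 :: "nat \<Rightarrow> nat \<times> nat \<Rightarrow> (nat \<times> nat) list" where
  "N1 n v = (case v of (i, j) \<Rightarrow> [(nx 8 i, j), (pv 8 i, j), (i, nx n j), (i, pv n j)])"

definition N2 :: "nat \<Rightarrow> nat \<times> nat \<Rightarrow> (nat \<times> nat) list" where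
  "N2 n v = (case v of (i, j) \<Rightarrow> [(nx2 8 i, j), (pv2 8 i, j), (i, nx2 n j), (i, pv2 n j),
     (nx 8 i, nx n j), (nx 8 i, pv n j), (pv 8 i, nx n j), (pv 8 i, pv n j)])"

lemma torus_adj_iff:
  assumes "i < 8" "j < n" "5 \<le> n"
  shows "torus_adj 8 n (i, j) q \<longleftrightarrow> q \<in> set (N1 n (i, j))"
  using assms
  by (cases q) (auto simp: torus_adj_def cart_adj_def N1_def cycle_adj_iff)

lemma torus_V_iff: "(i, j) \<in> torus_V m n \<longleftrightarrow> i < m \<and> j < n"
  by (simp add: torus_V_def)

lemma N1_in_V:
  assumes "i < 8" "j < n" "5 \<le> n"
  shows "set (N1 n (i, j)) \<subseteq> torus_V 8 n"
  using assms cyc_lt[of 8] cyc_lt[of n] by (auto simp: N1_def torus_V_iff)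

lemma N2_in_V:
  assumes "i < 8" "j < n" "5 \<le> n"
  shows "set (N2 n (i, j)) \<subseteq> torus_V 8 n"
  using assms cyc_lt[of 8] cyc_lt[of n] by (auto simp: N2_def torus_V_iff)

lemma row_cases: "(i::nat) < 8 \<Longrightarrow> i = 0 \<or> i = 1 \<or> i = 2 \<or> i = 3 \<or> i = 4 \<or> i = 5 \<or> i = 6 \<or> i = 7"
  by auto

lemma col_distinct:
  assumes "j < n" "5 \<le> n"
  shows "nx n j \<noteq> j \<and> pv n j \<noteq> j \<and> nx n j \<noteq> pv n j \<and> nx2 n j \<noteq> j \<and> pv2 n j \<noteq> j \<and>
    nx2 n j \<noteq> pv2 n j \<and> nx2 n j \<noteq> nx n j \<and> nx2 n j \<noteq> pv n j \<and> pv2 n j \<noteq> nx n j \<and> pv2 n j \<noteq> pv n j"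
  using assms by (auto simp: cyc_if)

lemma distinct_all:
  assumes "i < 8" "j < n" "5 \<le> n"
  shows "distinct ((i, j) # N1 n (i, j) @ N2 n (i, j))"
  using col_distinct[OF assms(2,3)] col_distinct[OF assms(1), of] assms
  by (auto simp: N1_def N2_def)


lemma N2_via_N1:
  assumes "i < 8" "j < n" "5 \<le> n"
  shows "\<forall>u\<in>set (N2 n (i, j)). \<exists>w\<in>set (N1 n (i, j)). u \<in> set (N1 n w)"
  using assms by (simp add: N1_def N2_def cyc_comp)

lemma N1_N1_sub:
  assumes "i < 8" "j < n" "5 \<le> n" "w \<in> set (N1 n (i, j))" "u \<in> set (N1 n w)" "u \<noteq> (i, j)"
  shows "u \<in> set (N2 n (i, j))"
  using assms by (auto simp: N1_def N2_def cyc_comp)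

lemma sph1_sub:
  assumes "i < 8" "j < n" "5 \<le> n"
  shows "sphere (torus_adj 8 n) (torus_V 8 n) (i, j) 1 \<subseteq> set (N1 n (i, j))"
proof
  fix u assume "u \<in> sphere (torus_adj 8 n) (torus_V 8 n) (i, j) 1"
  then have "torus_adj 8 n (i, j) u" by (rule sphere1_D[THEN conjunct1])
  thus "u \<in> set (N1 n (i, j))" using torus_adj_iff[OF assms] by blast
qed

lemma sph2_sub:
  assumes "i < 8" "j < n" "5 \<le> n"
  shows "sphere (torus_adj 8 n) (torus_V 8 n) (i, j) 2 \<subseteq> set (N2 n (i, j))"
proof
  fix u assume "u \<in> sphere (torus_adj 8 n) (torus_V 8 n) (i, j) 2"
  then have u: "walk (torus_adj 8 n) (torus_V 8 n) (i, j) u 2" "u \<noteq> (i, j)" by (auto dest: sphere2_D)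
  then obtain w where w: "torus_adj 8 n (i, j) w" "w \<in> torus_V 8 n" "torus_adj 8 n w u"
    by (auto simp: walk2_iff)
  obtain i' j' where w': "w = (i', j')" by (cases w)
  have b: "i' < 8" "j' < n" using w(2) w' by (auto simp: torus_V_iff)
  have "w \<in> set (N1 n (i, j))" using w(1) torus_adj_iff[OF assms] by blast
  moreover have "u \<in> set (N1 n w)" using w(3) torus_adj_iff[OF b assms(3)] w' by blast
  ultimately show "u \<in> set (N2 n (i, j))" using N1_N1_sub[OF assms] u(2) by blast
qed

lemma N1_sph:
  assumes "i < 8" "j < n" "5 \<le> n"
  shows "set (N1 n (i, j)) \<subseteq> sphere (torus_adj 8 n) (torus_V 8 n) (i, j) 1"
proof
  fix u assume u: "u \<in> set (N1 n (i, j))"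
  have "u \<noteq> (i, j)" using distinct_all[OF assms] u by auto
  moreover have "u \<in> torus_V 8 n" using N1_in_V[OF assms] u by blast
  moreover have "(i, j) \<in> torus_V 8 n" using assms by (simp add: torus_V_iff)
  moreover have "torus_adj 8 n (i, j) u" using torus_adj_iff[OF assms] u by blast
  ultimately show "u \<in> sphere (torus_adj 8 n) (torus_V 8 n) (i, j) 1" by (intro sphere1_I)
qed

lemma N2_sph:
  assumes "i < 8" "j < n" "5 \<le> n"
  shows "set (N2 n (i, j)) \<subseteq> sphere (torus_adj 8 n) (torus_V 8 n) (i, j) 2"
proof
  fix u assume u: "u \<in> set (N2 n (i, j))"
  have d: "u \<noteq> (i, j)" "u \<notin> set (N1 n (i, j))" using distinct_all[OF assms] u by auto
  obtain w where w: "w \<in> set (N1 n (i, j))" "u \<in> set (N1 n w)" using N2_via_N1[OF assms] u by blast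
  obtain i' j' where w': "w = (i', j')" by (cases w)
  have wV: "w \<in> torus_V 8 n" using N1_in_V[OF assms] w(1) by blast
  have b: "i' < 8" "j' < n" using wV w' by (auto simp: torus_V_iff)
  have uV: "u \<in> torus_V 8 n" using N2_in_V[OF assms] u by blast
  have vV: "(i, j) \<in> torus_V 8 n" using assms by (simp add: torus_V_iff)
  have e1: "torus_adj 8 n (i, j) w" using torus_adj_iff[OF assms] w(1) by blast
  have e2: "torus_adj 8 n w u" using torus_adj_iff[OF b assms(3)] w(2) w' by blast
  have "walk (torus_adj 8 n) (torus_V 8 n) (i, j) u 2"
    unfolding walk2_iff using vV e1 wV e2 uV by blast
  moreover have "\<not> torus_adj 8 n (i, j) u" using torus_adj_iff[OF assms] d(2) by blast
  ultimately show "u \<in> sphere (torus_adj 8 n) (torus_V 8 n) (i, j) 2" using d(1) by (intro sphere2_I)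
qed


definition ind :: "'a set \<Rightarrow> 'a \<Rightarrow> nat" where "ind S p = (if p \<in> S then 1 else 0)"

lemma card_le_sum_list: "card (set xs \<inter> S) \<le> sum_list (map (ind S) xs)"
proof (induction xs)
  case Nil thus ?case by simp
next
  case (Cons x xs)
  have "card (set (x # xs) \<inter> S) \<le> ind S x + card (set xs \<inter> S)"
  proof (cases "x \<in> S")
    case True
    have "set (x # xs) \<inter> S = insert x (set xs \<inter> S)" using True by auto
    thus ?thesis using True by (simp add: ind_def card_insert_if)
  next
    case False
    have "set (x # xs) \<inter> S = set xs \<inter> S" using False by auto
    thus ?thesis by simp
  qed
  thus ?case using Cons by simp
qed

lemma card_eq_sum_list: "distinct xs \<Longrightarrow> card (set xs \<inter> S) = sum_list (map (ind S) xs)"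
proof (induction xs)
  case Nil thus ?case by simp
next
  case (Cons x xs)
  have "card (set (x # xs) \<inter> S) = ind S x + card (set xs \<inter> S)"
  proof (cases "x \<in> S")
    case True
    have "set (x # xs) \<inter> S = insert x (set xs \<inter> S)" using True by auto
    thus ?thesis using True Cons.prems by (simp add: ind_def)
  next
    case False
    have "set (x # xs) \<inter> S = set xs \<inter> S" using False by auto
    thus ?thesis using False by (simp add: ind_def)
  qed
  thus ?case using Cons by simp
qed

lemma finite_torus_V: "finite (torus_V m n)"
  by (simp add: torus_V_def)

lemma sphere_sub_V: "sphere E V v d \<subseteq> V"
  by (auto simp: sphere_def)

lemma cov_bound:
  assumes dds: "disj_dom_set (torus_adj 8 n) (torus_V 8 n) S"
    and a: "i < 8" "j < n" "5 \<le> n"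
  shows "2 \<le> 2 * ind S (i, j) + 2 * sum_list (map (ind S) (N1 n (i, j))) + sum_list (map (ind S) (N2 n (i, j)))"
proof (cases "(i, j) \<in> S")
  case True thus ?thesis by (simp add: ind_def)
next
  case False
  have vV: "(i, j) \<in> torus_V 8 n" using a by (simp add: torus_V_iff)
  let ?E = "torus_adj 8 n" and ?V = "torus_V 8 n"
  have "card (sphere ?E ?V (i, j) 1 \<inter> S) \<ge> 1 \<or> card (sphere ?E ?V (i, j) 2 \<inter> S) \<ge> 2"
    using dds False vV unfolding disj_dom_set_def by blast
  thus ?thesis
  proof
    assume h: "card (sphere ?E ?V (i, j) 1 \<inter> S) \<ge> 1"
    have "card (sphere ?E ?V (i, j) 1 \<inter> S) \<le> card (set (N1 n (i, j)) \<inter> S)"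
      using sph1_sub[OF a] by (intro card_mono) auto
    also have "\<dots> \<le> sum_list (map (ind S) (N1 n (i, j)))" by (rule card_le_sum_list)
    finally show ?thesis using h by linarith
  next
    assume h: "card (sphere ?E ?V (i, j) 2 \<inter> S) \<ge> 2"
    have "card (sphere ?E ?V (i, j) 2 \<inter> S) \<le> card (set (N2 n (i, j)) \<inter> S)"
      using sph2_sub[OF a] by (intro card_mono) auto
    also have "\<dots> \<le> sum_list (map (ind S) (N2 n (i, j)))" by (rule card_le_sum_list)
    finally show ?thesis using h by linarith
  qed
qed

lemma dom_from_local:
  assumes S: "S \<subseteq> torus_V 8 n" and n: "5 \<le> n"
    and loc: "\<And>i j. i < 8 \<Longrightarrow> j < n \<Longrightarrow> (i, j) \<notin> S \<Longrightarrow>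
       (\<exists>u\<in>set (N1 n (i, j)). u \<in> S) \<or> 2 \<le> sum_list (map (ind S) (N2 n (i, j)))"
  shows "disj_dom_set (torus_adj 8 n) (torus_V 8 n) S"
  unfolding disj_dom_set_def
proof (intro conjI S ballI)
  let ?E = "torus_adj 8 n" and ?V = "torus_V 8 n"
  fix v assume v: "v \<in> ?V - S"
  obtain i j where ij: "v = (i, j)" by (cases v)
  have a: "i < 8" "j < n" using v ij by (auto simp: torus_V_iff)
  have fin: "\<And>d. finite (sphere ?E ?V v d \<inter> S)"
    using finite_torus_V sphere_sub_V by (meson finite_Int finite_subset)
  from loc[OF a] v ij
  have "(\<exists>u\<in>set (N1 n (i, j)). u \<in> S) \<or> 2 \<le> sum_list (map (ind S) (N2 n (i, j)))" by blast
  thus "card (sphere ?E ?V v 1 \<inter> S) \<ge> 1 \<or> card (sphere ?E ?V v 2 \<inter> S) \<ge> 2"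
  proof
    assume "\<exists>u\<in>set (N1 n (i, j)). u \<in> S"
    then obtain u where "u \<in> set (N1 n (i, j))" "u \<in> S" by blast
    then have "u \<in> sphere ?E ?V v 1 \<inter> S" using N1_sph[OF a n] ij by blast
    then have "card (sphere ?E ?V v 1 \<inter> S) \<noteq> 0" using fin[of 1] by auto
    thus ?thesis by linarith
  next
    assume h: "2 \<le> sum_list (map (ind S) (N2 n (i, j)))"
    have dN2: "distinct (N2 n (i, j))" using distinct_all[OF a n] by simp
    have "sum_list (map (ind S) (N2 n (i, j))) = card (set (N2 n (i, j)) \<inter> S)"
      using card_eq_sum_list[OF dN2] by simp
    also have "\<dots> \<le> card (sphere ?E ?V v 2 \<inter> S)"
      using N2_sph[OF a n] ij fin[of 2] by (intro card_mono) auto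
    finally show ?thesis using h by linarith
  qed
qed


lemma row_vals: "nx 8 0 = 1" "nx 8 1 = 2" "nx 8 2 = 3" "nx 8 3 = 4" "nx 8 4 = 5" "nx 8 5 = 6" "nx 8 6 = 7" "nx 8 7 = 0" "pv 8 0 = 7" "pv 8 1 = 0" "pv 8 2 = 1" "pv 8 3 = 2" "pv 8 4 = 3" "pv 8 5 = 4" "pv 8 6 = 5" "pv 8 7 = 6" "nx2 8 0 = 2" "nx2 8 1 = 3" "nx2 8 2 = 4" "nx2 8 3 = 5" "nx2 8 4 = 6" "nx2 8 5 = 7" "nx2 8 6 = 0" "nx2 8 7 = 1" "pv2 8 0 = 6" "pv2 8 1 = 7" "pv2 8 2 = 0" "pv2 8 3 = 1" "pv2 8 4 = 2" "pv2 8 5 = 3" "pv2 8 6 = 4" "pv2 8 7 = 5"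
  by (simp_all add: nx_def pv_def nx2_def pv2_def)

lemma row_vals1: "nx 8 (Suc 0) = 2" "pv 8 (Suc 0) = 0" "nx2 8 (Suc 0) = 3" "pv2 8 (Suc 0) = 7"
  by (simp_all add: nx_def pv_def nx2_def pv2_def)

definition colc :: "(nat \<times> nat) set \<Rightarrow> nat \<Rightarrow> nat" where
  "colc S j = ind S (0, j) + ind S (1, j) + ind S (2, j) + ind S (3, j) + ind S (4, j) + ind S (5, j) + ind S (6, j) + ind S (7, j)"

lemma colc_le: "colc S j \<le> 8"
  unfolding colc_def ind_def by simp

lemma col_ineq:
  assumes dds: "disj_dom_set (torus_adj 8 n) (torus_V 8 n) S"
    and a: "j < n" "5 \<le> n"
  shows "16 \<le> 8 * colc S j + 4 * (colc S (nx n j) + colc S (pv n j)) + colc S (nx2 n j) + colc S (pv2 n j)"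
proof -
  have h: "\<And>i. i < 8 \<Longrightarrow> 2 \<le> 2 * ind S (i, j) + 2 * sum_list (map (ind S) (N1 n (i, j))) + sum_list (map (ind S) (N2 n (i, j)))"
    using cov_bound[OF dds _ a] by blast
  have r0: "2 \<le> 2 * ind S (0, j) + 2 * (ind S (1, j) + ind S (7, j) + ind S (0, nx n j) + ind S (0, pv n j)) + (ind S (2, j) + ind S (6, j) + ind S (0, nx2 n j) + ind S (0, pv2 n j) + ind S (1, nx n j) + ind S (1, pv n j) + ind S (7, nx n j) + ind S (7, pv n j))"
    using h[of 0] by (simp add: N1_def N2_def row_vals row_vals1)
  have r1: "2 \<le> 2 * ind S (1, j) + 2 * (ind S (2, j) + ind S (0, j) + ind S (1, nx n j) + ind S (1, pv n j)) + (ind S (3, j) + ind S (7, j) + ind S (1, nx2 n j) + ind S (1, pv2 n j) + ind S (2, nx n j) + ind S (2, pv n j) + ind S (0, nx n j) + ind S (0, pv n j))"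
    using h[of 1] by (simp add: N1_def N2_def row_vals row_vals1)
  have r2: "2 \<le> 2 * ind S (2, j) + 2 * (ind S (3, j) + ind S (1, j) + ind S (2, nx n j) + ind S (2, pv n j)) + (ind S (4, j) + ind S (0, j) + ind S (2, nx2 n j) + ind S (2, pv2 n j) + ind S (3, nx n j) + ind S (3, pv n j) + ind S (1, nx n j) + ind S (1, pv n j))"
    using h[of 2] by (simp add: N1_def N2_def row_vals row_vals1)
  have r3: "2 \<le> 2 * ind S (3, j) + 2 * (ind S (4, j) + ind S (2, j) + ind S (3, nx n j) + ind S (3, pv n j)) + (ind S (5, j) + ind S (1, j) + ind S (3, nx2 n j) + ind S (3, pv2 n j) + ind S (4, nx n j) + ind S (4, pv n j) + ind S (2, nx n j) + ind S (2, pv n j))"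
    using h[of 3] by (simp add: N1_def N2_def row_vals row_vals1)
  have r4: "2 \<le> 2 * ind S (4, j) + 2 * (ind S (5, j) + ind S (3, j) + ind S (4, nx n j) + ind S (4, pv n j)) + (ind S (6, j) + ind S (2, j) + ind S (4, nx2 n j) + ind S (4, pv2 n j) + ind S (5, nx n j) + ind S (5, pv n j) + ind S (3, nx n j) + ind S (3, pv n j))"
    using h[of 4] by (simp add: N1_def N2_def row_vals row_vals1)
  have r5: "2 \<le> 2 * ind S (5, j) + 2 * (ind S (6, j) + ind S (4, j) + ind S (5, nx n j) + ind S (5, pv n j)) + (ind S (7, j) + ind S (3, j) + ind S (5, nx2 n j) + ind S (5, pv2 n j) + ind S (6, nx n j) + ind S (6, pv n j) + ind S (4, nx n j) + ind S (4, pv n j))"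
    using h[of 5] by (simp add: N1_def N2_def row_vals row_vals1)
  have r6: "2 \<le> 2 * ind S (6, j) + 2 * (ind S (7, j) + ind S (5, j) + ind S (6, nx n j) + ind S (6, pv n j)) + (ind S (0, j) + ind S (4, j) + ind S (6, nx2 n j) + ind S (6, pv2 n j) + ind S (7, nx n j) + ind S (7, pv n j) + ind S (5, nx n j) + ind S (5, pv n j))"
    using h[of 6] by (simp add: N1_def N2_def row_vals row_vals1)
  have r7: "2 \<le> 2 * ind S (7, j) + 2 * (ind S (0, j) + ind S (6, j) + ind S (7, nx n j) + ind S (7, pv n j)) + (ind S (1, j) + ind S (5, j) + ind S (7, nx2 n j) + ind S (7, pv2 n j) + ind S (0, nx n j) + ind S (0, pv n j) + ind S (6, nx n j) + ind S (6, pv n j))"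
    using h[of 7] by (simp add: N1_def N2_def row_vals row_vals1)
  have "2 + 2 + 2 + 2 + 2 + 2 + 2 + 2 \<le> (2 * ind S (0, j) + 2 * (ind S (1, j) + ind S (7, j) + ind S (0, nx n j) + ind S (0, pv n j)) + (ind S (2, j) + ind S (6, j) + ind S (0, nx2 n j) + ind S (0, pv2 n j) + ind S (1, nx n j) + ind S (1, pv n j) + ind S (7, nx n j) + ind S (7, pv n j))) + (2 * ind S (1, j) + 2 * (ind S (2, j) + ind S (0, j) + ind S (1, nx n j) + ind S (1, pv n j)) + (ind S (3, j) + ind S (7, j) + ind S (1, nx2 n j) + ind S (1, pv2 n j) + ind S (2, nx n j) + ind S (2, pv n j) + ind S (0, nx n j) + ind S (0, pv n j))) + (2 * ind S (2, j) + 2 * (ind S (3, j) + ind S (1, j) + ind S (2, nx n j) + ind S (2, pv n j)) + (ind S (4, j) + ind S (0, j) + ind S (2, nx2 n j) + ind S (2, pv2 n j) + ind S (3, nx n j) + ind S (3, pv n j) + ind S (1, nx n j) + ind S (1, pv n j))) + (2 * ind S (3, j) + 2 * (ind S (4, j) + ind S (2, j) + ind S (3, nx n j) + ind S (3, pv n j)) + (ind S (5, j) + ind S (1, j) + ind S (3, nx2 n j) + ind S (3, pv2 n j) + ind S (4, nx n j) + ind S (4, pv n j) + ind S (2, nx n j) + ind S (2, pv n j))) + (2 * ind S (4, j) + 2 * (ind S (5, j) + ind S (3, j) + ind S (4, nx n j) + ind S (4, pv n j)) + (ind S (6, j) + ind S (2, j) + ind S (4, nx2 n j) + ind S (4, pv2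 n j) + ind S (5, nx n j) + ind S (5, pv n j) + ind S (3, nx n j) + ind S (3, pv n j))) + (2 * ind S (5, j) + 2 * (ind S (6, j) + ind S (4, j) + ind S (5, nx n j) + ind S (5, pv n j)) + (ind S (7, j) + ind S (3, j) + ind S (5, nx2 n j) + ind S (5, pv2 n j) + ind S (6, nx n j) + ind S (6, pv n j) + ind S (4, nx n j) + ind S (4, pv n j))) + (2 * ind S (6, j) + 2 * (ind S (7, j) + ind S (5, j) + ind S (6, nx n j) + ind S (6, pv n j)) + (ind S (0, j) + ind S (4, j) + ind S (6, nx2 n j) + ind S (6, pv2 n j) + ind S (7, nx n j) + ind S (7, pv n j) + ind S (5, nx n j) + ind S (5, pv n j))) + (2 * ind S (7, j) + 2 * (ind S (0, j) + ind S (6, j) + ind S (7, nx n j) + ind S (7, pv n j)) + (ind S (1, j) + ind S (5, j) + ind S (7, nx2 n j) + ind S (7, pv2 n j) + ind S (0, nx n j) + ind S (0, pv n j) + ind S (6, nx n j) + ind S (6, pv n j)))"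
    by (intro add_mono r0 r1 r2 r3 r4 r5 r6 r7)
  also have "\<dots> = 8 * colc S j + 4 * (colc S (nx n j) + colc S (pv n j)) + colc S (nx2 n j) + colc S (pv2 n j)"
    unfolding colc_def by (simp add: algebra_simps)
  finally show ?thesis by simp
qed


definition tbl :: "nat list list list list" where "tbl = [[[[0, 0, 0, 0, 0], [0, 0, 0, 0, 0], [2, 1, 0, 0, 0], [1, 0, 0, 0, 0], [1, 0, 0, 0, 0]], [[3, 2, 1, 0, 0], [2, 1, 0, 0, 0], [1, 0, 0, 0, 0], [1, 0, 0, 0, 0], [1, 0, 0, 0, 0]], [[3, 2, 1, 0, 0], [2, 1, 0, 0, 0], [1, 0, 0, 0, 0], [1, 0, 0, 0, 0], [1, 0, 0, 0, 0]], [[2, 1, 0, 0, 0], [1, 0, 0, 0, 0], [1, 0, 0, 0, 0], [1, 0, 0, 0, 0], [1, 0, 0, 0, 0]], [[2, 1, 0, 0, 0], [1, 0, 0, 0, 0], [1, 0, 0, 0, 0], [1, 0, 0, 0, 0], [1, 0, 0, 0, 0]]], [[[0, 0, 0, 0, 0], [2, 1, 0, 0, 0], [1, 0, 0, 0, 0], [1, 0, 0, 0, 0], [1, 0, 0, 0, 0]], [[2, 1, 1, 0, 0], [2, 1, 0, 0, 0], [1, 0, 0, 0, 0], [1, 0, 0, 0, 0], [1, 0, 0, 0, 0]], [[2, 1, 0, 0, 0], [1, 0, 0, 0, 0], [1, 0, 0, 0, 0], [1, 0, 0, 0, 0], [1, 0, 0, 0, 0]], [[2, 1, 0, 0, 0],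 [1, 0, 0, 0, 0], [1, 0, 0, 0, 0], [1, 0, 0, 0, 0], [1, 0, 0, 0, 0]], [[2, 1, 0, 0, 0], [1, 0, 0, 0, 0], [1, 0, 0, 0, 0], [1, 0, 0, 0, 0], [1, 0, 0, 0, 0]]], [[[3, 2, 1, 0, 0], [2, 1, 0, 0, 0], [2, 1, 0, 0, 0], [1, 0, 0, 0, 0], [1, 0, 0, 0, 0]], [[3, 2, 1, 0, 0], [2, 1, 0, 0, 0], [1, 0, 0, 0, 0], [1, 0, 0, 0, 0], [1, 0, 0, 0, 0]], [[2, 1, 0, 0, 0], [1, 0, 0, 0, 0], [1, 0, 0, 0, 0], [1, 0, 0, 0, 0], [1, 0, 0, 0, 0]], [[2, 1, 0, 0, 0], [1, 0, 0, 0, 0], [1, 0, 0, 0, 0], [1, 0, 0, 0, 0], [1, 0, 0, 0, 0]], [[2, 1, 0, 0, 0], [1, 0, 0, 0, 0], [1, 0, 0, 0, 0], [1, 0, 0, 0, 0], [1, 0, 0, 0, 0]]], [[[3, 2, 1, 0, 0], [2, 1, 0, 0, 0], [1, 0, 0, 0, 0], [1, 0, 0, 0, 0], [1, 0, 0, 0, 0]], [[2, 1, 0, 0, 0], [1, 0, 0, 0, 0], [1, 0, 0, 0, 0], [1, 0, 0, 0, 0], [1, 0, 0, 0, 0]], [[2, 1, 0, 0, 0], [1, 0, 0, 0, 0], [1, 0, 0, 0, 0], [1, 0, 0, 0, 0], [1, 0, 0, 0, 0]], [[2, 1, 0, 0, 0], [1, 0, 0, 0, 0], [1, 0, 0, 0,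 0], [1, 0, 0, 0, 0], [1, 0, 0, 0, 0]], [[2, 1, 0, 0, 0], [1, 0, 0, 0, 0], [1, 0, 0, 0, 0], [1, 0, 0, 0, 0], [1, 0, 0, 0, 0]]], [[[3, 2, 1, 0, 0], [2, 1, 0, 0, 0], [1, 0, 0, 0, 0], [1, 0, 0, 0, 0], [1, 0, 0, 0, 0]], [[2, 1, 0, 0, 0], [1, 0, 0, 0, 0], [1, 0, 0, 0, 0], [1, 0, 0, 0, 0], [1, 0, 0, 0, 0]], [[2, 1, 0, 0, 0], [1, 0, 0, 0, 0], [1, 0, 0, 0, 0], [1, 0, 0, 0, 0], [1, 0, 0, 0, 0]], [[2, 1, 0, 0, 0], [1, 0, 0, 0, 0], [1, 0, 0, 0, 0], [1, 0, 0, 0, 0], [1, 0, 0, 0, 0]], [[2, 1, 0, 0, 0], [1, 0, 0, 0, 0], [1, 0, 0, 0, 0], [1, 0, 0, 0, 0], [1, 0, 0, 0, 0]]]]"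
definition psi :: "nat \<Rightarrow> nat \<Rightarrow> nat \<Rightarrow> nat \<Rightarrow> nat" where
 "psi a b c d = tbl ! min a 4 ! min b 4 ! min c 4 ! min d 4"
definition vv :: "nat \<Rightarrow> nat" where "vv x = (if x \<ge> 4 then 8 else x)"
definition chk :: bool where
 "chk = (\<forall>a\<in>set [0..<5]. \<forall>b\<in>set [0..<5]. \<forall>c\<in>set [0..<5]. \<forall>d\<in>set [0..<5]. \<forall>e\<in>set [0..<5].
    16 \<le> 8 * vv c + 4 * (vv b + vv d) + vv a + vv e \<longrightarrow> psi a b c d + 1 \<le> e + psi b c d e)"

lemma chk_true: chk
  unfolding chk_def by code_simp

lemma vv_min: "x \<le> 8 \<Longrightarrow> x \<le> vv (min x 4)"
  by (simp add: vv_def)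

lemma psi_min: "psi (min a 4) (min b 4) (min c 4) (min d 4) = psi a b c d"
  by (simp add: psi_def)

lemma lin_mono: "(a::nat) \<le> A \<Longrightarrow> b \<le> B \<Longrightarrow> c \<le> C \<Longrightarrow> d \<le> D \<Longrightarrow> e \<le> E \<Longrightarrow>
  16 \<le> 8 * c + 4 * (b + d) + a + e \<Longrightarrow> 16 \<le> 8 * C + 4 * (B + D) + A + E"
  by (erule order.trans) (intro add_mono mult_le_mono2; assumption)

lemma key_step:
  assumes "a \<le> 8" "b \<le> 8" "c \<le> 8" "d \<le> 8" "e \<le> 8"
    and G: "16 \<le> 8 * c + 4 * (b + d) + a + e"
  shows "psi a b c d + 1 \<le> e + psi b c d e"
proof -
  have m: "min x 4 \<in> set [0..<5]" for x :: nat by simp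
  have G': "16 \<le> 8 * vv (min c 4) + 4 * (vv (min b 4) + vv (min d 4)) + vv (min a 4) + vv (min e 4)"
    by (rule lin_mono[OF vv_min[OF assms(1)] vv_min[OF assms(2)] vv_min[OF assms(3)] vv_min[OF assms(4)] vv_min[OF assms(5)] G])
  have "psi (min a 4) (min b 4) (min c 4) (min d 4) + 1 \<le> min e 4 + psi (min b 4) (min c 4) (min d 4) (min e 4)"
    using chk_true G' m unfolding chk_def by blast
  thus ?thesis unfolding psi_min by linarith
qed

lemma sum_shift_periodic:
  fixes f :: "nat \<Rightarrow> nat"
  assumes "f n = f 0"
  shows "(\<Sum>j<n. f (Suc j)) = (\<Sum>j<n. f j)"
proof -
  have "(\<Sum>j<Suc n. f j) = f 0 + (\<Sum>j<n. f (Suc j))" by (rule sum.lessThan_Suc_shift)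
  moreover have "(\<Sum>j<Suc n. f j) = (\<Sum>j<n. f j) + f n" by simp
  ultimately show ?thesis using assms by linarith
qed

lemma potential_bound:
  fixes c :: "nat \<Rightarrow> nat"
  assumes per: "\<And>j. c (j + n) = c j" and bd: "\<And>j. c j \<le> 8"
    and G: "\<And>j. 16 \<le> 8 * c (j + 2) + 4 * (c (j + 1) + c (j + 3)) + c j + c (j + 4)"
  shows "n \<le> (\<Sum>j<n. c j)"
proof -
  define p where "p j = psi (c j) (c (j + 1)) (c (j + 2)) (c (j + 3))" for j
  have step: "p j + 1 \<le> c (j + 4) + p (Suc j)" for j
  proof -
    have e1: "p j = psi (c j) (c (j + 1)) (c (j + 2)) (c (j + 3))" by (simp only: p_def)
    have ar: "Suc j = j + 1" "j + 1 + 1 = j + 2" "j + 1 + 2 = j + 3" "j + 1 + 3 = j + 4" by simp_all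
    have e2: "p (Suc j) = psi (c (j + 1)) (c (j + 2)) (c (j + 3)) (c (j + 4))"
      by (simp only: p_def ar)
    show ?thesis unfolding e1 e2 by (rule key_step[OF bd bd bd bd bd G[of j]])
  qed
  have q: "c (n + k) = c k" for k using per[of k] by (simp only: add.commute)
  have "p n = psi (c n) (c (n + 1)) (c (n + 2)) (c (n + 3))" by (simp only: p_def)
  also have "\<dots> = psi (c 0) (c 1) (c 2) (c 3)" using q[of 0] q[of 1] q[of 2] q[of 3] by (simp only: add_0_right)
  also have "\<dots> = p 0" by (simp only: p_def add_0_left)
  finally have pp: "p n = p 0" .
  have cc: "(\<Sum>j<n. c (j + k)) = (\<Sum>j<n. c j)" for k
  proof (induction k)
    case 0 thus ?case by simp
  next
    case (Suc k)
    have "(\<Sum>j<n. c (Suc j + k)) = (\<Sum>j<n. c (j + k))"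
      using sum_shift_periodic[of "\<lambda>j. c (j + k)" n] per[of k] by (simp add: add.commute)
    thus ?case using Suc by simp
  qed
  have "(\<Sum>j<n. p j + 1) \<le> (\<Sum>j<n. c (j + 4) + p (Suc j))"
    by (rule sum_mono) (rule step)
  also have "\<dots> = (\<Sum>j<n. c j) + (\<Sum>j<n. p j)"
    using cc[of 4] sum_shift_periodic[of p n, OF pp] by (simp add: sum.distrib)
  finally have f: "(\<Sum>j<n. p j + 1) \<le> (\<Sum>j<n. c j) + (\<Sum>j<n. p j)" .
  have "(\<Sum>j<n. p j + 1) = (\<Sum>j<n. p j) + n" by (simp only: sum.distrib) simp
  with f show ?thesis by linarith
qed


lemma sum8: "(\<Sum>i<(8::nat). f i) = f 0 + f 1 + f 2 + f 3 + f 4 + f 5 + f 6 + (f 7 :: nat)"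
  by (simp add: eval_nat_numeral)

lemma card_as_colsum:
  assumes S: "S \<subseteq> torus_V 8 n"
  shows "card S = (\<Sum>j<n. colc S j)"
proof -
  have fin: "finite (torus_V 8 n)" by (rule finite_torus_V)
  have "card S = card (torus_V 8 n \<inter> S)" using S by (simp add: Int_absorb1)
  also have "\<dots> = (\<Sum>p\<in>torus_V 8 n. ind S p)"
    unfolding ind_def using fin by (simp add: sum.If_cases Int_def)
  also have "\<dots> = (\<Sum>i<8. \<Sum>j<n. ind S (i, j))"
    unfolding torus_V_def by (simp add: sum.cartesian_product atLeast0LessThan)
  also have "\<dots> = (\<Sum>j<n. \<Sum>i<8. ind S (i, j))" by (rule sum.swap)
  also have "\<dots> = (\<Sum>j<n. colc S j)" by (simp add: sum8 colc_def)
  finally show ?thesis .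
qed

lemma mod_shift:
  assumes "5 \<le> n"
  shows "nx n ((j + 2) mod n) = (j + 3) mod n" "pv n ((j + 2) mod n) = (j + 1) mod n"
    "nx2 n ((j + 2) mod n) = (j + 4) mod n" "pv2 n ((j + 2) mod n) = j mod n"
proof -
  have e: "j + 2 + 1 = j + 3" "j + 2 + 2 = j + 4" by simp_all
  show "nx n ((j + 2) mod n) = (j + 3) mod n" unfolding nx_def mod_add_left_eq e by (rule refl)
  show "nx2 n ((j + 2) mod n) = (j + 4) mod n" unfolding nx2_def mod_add_left_eq e by (rule refl)
  have "((j + 2) mod n + n - 1) mod n = ((j + 2) mod n + (n - 1)) mod n" using assms by simp
  also have "\<dots> = (j + 2 + (n - 1)) mod n" by (simp add: mod_add_left_eq)
  also have "j + 2 + (n - 1) = (j + 1) + n" using assms by simp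
  also have "((j + 1) + n) mod n = (j + 1) mod n" by (rule mod_add_self2)
  finally show "pv n ((j + 2) mod n) = (j + 1) mod n" unfolding pv_def .
  have "((j + 2) mod n + n - 2) mod n = ((j + 2) mod n + (n - 2)) mod n" using assms by simp
  also have "\<dots> = (j + 2 + (n - 2)) mod n" by (simp add: mod_add_left_eq)
  also have "j + 2 + (n - 2) = j + n" using assms by simp
  also have "(j + n) mod n = j mod n" by (rule mod_add_self2)
  finally show "pv2 n ((j + 2) mod n) = j mod n" unfolding pv2_def .
qed

lemma lower_bound:
  assumes dds: "disj_dom_set (torus_adj 8 n) (torus_V 8 n) S" and n: "5 \<le> n"
  shows "n \<le> card S"
proof -
  define c where "c j = colc S (j mod n)" for j
  have per: "c (j + n) = c j" for j unfolding c_def by simp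
  have bd: "c j \<le> 8" for j unfolding c_def by (rule colc_le)
  have G: "16 \<le> 8 * c (j + 2) + 4 * (c (j + 1) + c (j + 3)) + c j + c (j + 4)" for j
  proof -
    have "(j + 2) mod n < n" using n by simp
    from col_ineq[OF dds this n] show ?thesis
      unfolding c_def mod_shift[OF n] by simp
  qed
  have "n \<le> (\<Sum>j<n. c j)" by (rule potential_bound[OF per bd G])
  also have "\<dots> = (\<Sum>j<n. colc S j)" unfolding c_def by (rule sum.cong) simp_all
  also have "\<dots> = card S"
  proof -
    have "S \<subseteq> torus_V 8 n" using dds unfolding disj_dom_set_def by blast
    thus ?thesis using card_as_colsum by metis
  qed
  finally show ?thesis .
qed


definition QL :: "nat list list" where "QL = [[0, 4], [], [2, 6], []]"
definition Qp :: "nat \<Rightarrow> nat list" where "Qp m = QL ! (m mod 4)"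

definition colp :: "nat list list \<Rightarrow> nat \<Rightarrow> nat list" where
  "colp B j = (if j < length B then B ! j else Qp (j - length B))"

definition Sc :: "nat list list \<Rightarrow> nat \<Rightarrow> (nat \<times> nat) set" where
  "Sc B n = {(i, j). i < 8 \<and> j < n \<and> i \<in> set (colp B j)}"

definition ix :: "nat \<Rightarrow> nat list \<Rightarrow> nat" where "ix x L = (if x \<in> set L then 1 else 0)"

definition goodw :: "nat list list \<Rightarrow> bool" where
  "goodw W = (\<forall>i\<in>set [0..<8].
     i \<in> set (W ! 2) \<or> nx 8 i \<in> set (W ! 2) \<or> pv 8 i \<in> set (W ! 2) \<or> i \<in> set (W ! 1) \<or> i \<in> set (W ! 3) \<or>
     2 \<le> ix (nx2 8 i) (W ! 2) + ix (pv2 8 i) (W ! 2) + ix i (W ! 4) + ix i (W ! 0) +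
          ix (nx 8 i) (W ! 3) + ix (nx 8 i) (W ! 1) + ix (pv 8 i) (W ! 3) + ix (pv 8 i) (W ! 1))"

definition win :: "nat list list \<Rightarrow> nat \<Rightarrow> nat \<Rightarrow> nat list list" where
  "win B n j = map (\<lambda>k. colp B ((j + k + n - 2) mod n)) [0..<5]"

lemma win_nth_gen: "k < 5 \<Longrightarrow> win B n j ! k = colp B ((j + k + n - 2) mod n)"
  by (simp add: win_def)

lemma win_nth:
  assumes "j < n" "5 \<le> n"
  shows "win B n j ! 0 = colp B (pv2 n j)" "win B n j ! 1 = colp B (pv n j)" "win B n j ! 2 = colp B j"
    "win B n j ! 3 = colp B (nx n j)" "win B n j ! 4 = colp B (nx2 n j)"
proof -
  have a0: "j + 0 + n - 2 = j + n - 2" by simp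
  have a1: "j + 1 + n - 2 = j + n - 1" using assms by simp
  have a2: "j + 2 + n - 2 = j + n" using assms by simp
  have a3: "j + 3 + n - 2 = (j + 1) + n" using assms by simp
  have a4: "j + 4 + n - 2 = (j + 2) + n" using assms by simp
  have w0: "win B n j ! 0 = colp B ((j + 0 + n - 2) mod n)" by (rule win_nth_gen) simp
  have w1: "win B n j ! 1 = colp B ((j + 1 + n - 2) mod n)" by (rule win_nth_gen) simp
  have w2: "win B n j ! 2 = colp B ((j + 2 + n - 2) mod n)" by (rule win_nth_gen) simp
  have w3: "win B n j ! 3 = colp B ((j + 3 + n - 2) mod n)" by (rule win_nth_gen) simp
  have w4: "win B n j ! 4 = colp B ((j + 4 + n - 2) mod n)" by (rule win_nth_gen) simp
  show "win B n j ! 0 = colp B (pv2 n j)" unfolding w0 a0 pv2_def by (rule refl)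
  show "win B n j ! 1 = colp B (pv n j)" unfolding w1 a1 pv_def by (rule refl)
  show "win B n j ! 2 = colp B j" unfolding w2 a2 using assms by simp
  show "win B n j ! 3 = colp B (nx n j)" unfolding w3 a3 nx_def mod_add_self2 by (rule refl)
  show "win B n j ! 4 = colp B (nx2 n j)" unfolding w4 a4 nx2_def mod_add_self2 by (rule refl)
qed

lemma ind_Sc:
  assumes "x < 8" "y < n"
  shows "ind (Sc B n) (x, y) = ix x (colp B y)"
  using assms by (simp add: ind_def ix_def Sc_def)

lemma Sc_dom:
  assumes n: "5 \<le> n" and g: "\<And>j. j < n \<Longrightarrow> goodw (win B n j)"
  shows "disj_dom_set (torus_adj 8 n) (torus_V 8 n) (Sc B n)"
proof (rule dom_from_local[OF _ n])
  show "Sc B n \<subseteq> torus_V 8 n" by (auto simp: Sc_def torus_V_def)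
next
  fix i j assume a: "i < 8" "j < n" "(i, j) \<notin> Sc B n"
  have gw: "goodw (win B n j)" using g a(2) by blast
  have i8: "i \<in> set [0..<8]" using a(1) by simp
  have ci: "nx 8 i < 8" "pv 8 i < 8" "nx2 8 i < 8" "pv2 8 i < 8" using cyc_lt[of 8] by simp_all
  have cj: "nx n j < n" "pv n j < n" "nx2 n j < n" "pv2 n j < n" using cyc_lt[of n] n by simp_all
  have mem: "\<And>x y. x < 8 \<Longrightarrow> y < n \<Longrightarrow> (x, y) \<in> Sc B n \<longleftrightarrow> x \<in> set (colp B y)"
    by (simp add: Sc_def)
  have "i \<in> set (colp B j) \<or> nx 8 i \<in> set (colp B j) \<or> pv 8 i \<in> set (colp B j) \<or>
     i \<in> set (colp B (pv n j)) \<or> i \<in> set (colp B (nx n j)) \<or>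
     2 \<le> ix (nx2 8 i) (colp B j) + ix (pv2 8 i) (colp B j) + ix i (colp B (nx2 n j)) + ix i (colp B (pv2 n j)) +
          ix (nx 8 i) (colp B (nx n j)) + ix (nx 8 i) (colp B (pv n j)) + ix (pv 8 i) (colp B (nx n j)) + ix (pv 8 i) (colp B (pv n j))"
    using gw i8 unfolding goodw_def win_nth[OF a(2) n] by blast
  moreover have "i \<notin> set (colp B j)" using a mem by blast
  ultimately show "(\<exists>u\<in>set (N1 n (i, j)). u \<in> Sc B n) \<or> 2 \<le> sum_list (map (ind (Sc B n)) (N2 n (i, j)))"
    using mem[OF ci(1) a(2)] mem[OF ci(2) a(2)] mem[OF a(1) cj(1)] mem[OF a(1) cj(2)]
    by (auto simp: N1_def N2_def ind_Sc a ci cj add.assoc)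
qed


definition Wd :: "nat list list \<Rightarrow> nat list list" where
  "Wd B = (map (\<lambda>m. Qp (m + 2)) [0..<2] @ B) @ map Qp [0..<4]"
definition Wd2 :: "nat list list \<Rightarrow> nat list list" where
  "Wd2 B = map Qp [0..<4] @ [B ! 0, B ! 1]"
definition allwins :: "nat list list \<Rightarrow> nat list list list" where
  "allwins B = map (\<lambda>s. map (\<lambda>k. Wd B ! (s + k)) [0..<5]) [0..<length B + 2] @
     [map (\<lambda>k. Wd2 B ! k) [0..<5], map (\<lambda>k. Wd2 B ! (k + 1)) [0..<5]] @
     map (\<lambda>r. map (\<lambda>k. Qp (r + k)) [0..<5]) [0..<4]"

lemma Qp_mod: "Qp (m + 4 * k) = Qp m"
  by (simp add: Qp_def)

lemma modhelp: "x = y + n \<Longrightarrow> y < n \<Longrightarrow> x mod (n::nat) = y"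
  by simp

lemma Qp_modk: "Qp (x + k) = Qp (x mod 4 + k)"
  by (simp add: Qp_def mod_add_left_eq)

lemma modhelp2: "x = y + n \<Longrightarrow> x mod n = y mod (n::nat)"
  by simp

lemma colE:
  assumes w: "length B = w" and n: "n = w + 4 * q" and q: "1 \<le> q" and t: "t \<le> w + 5"
  shows "colp B ((t + n - 2) mod n) = Wd B ! t"
proof -
  consider "t < 2" | "2 \<le> t" "t < w + 2" | "w + 2 \<le> t" by linarith
  then show ?thesis
  proof cases
    case 1
    have e: "(t + n - 2) mod n = t + n - 2" using 1 n q by simp
    have e2: "t + n - 2 - w = (t + 2) + 4 * (q - 1)" using 1 n q by simp
    have ge: "\<not> t + n - 2 < length B" using 1 n q w by simp
    have "colp B (t + n - 2) = Qp (t + n - 2 - w)" unfolding colp_def using ge w by simp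
    also have "\<dots> = Qp (t + 2)" unfolding e2 Qp_mod by (rule refl)
    finally have "colp B (t + n - 2) = Qp (t + 2)" .
    moreover have "Wd B ! t = Qp (t + 2)" unfolding Wd_def using 1 by (simp add: nth_append)
    ultimately show ?thesis using e by simp
  next
    case 2
    have e: "(t + n - 2) mod n = t - 2" by (rule modhelp) (use 2 n q in simp_all)
    have lt: "t - 2 < length B" using 2 w by linarith
    have "colp B (t - 2) = B ! (t - 2)" unfolding colp_def using lt by simp
    moreover have "Wd B ! t = B ! (t - 2)" unfolding Wd_def using 2 w lt by (simp add: nth_append)
    ultimately show ?thesis using e by simp
  next
    case 3
    have e: "(t + n - 2) mod n = t - 2" by (rule modhelp) (use 3 t n q in simp_all)
    have ge: "\<not> t - 2 < length B" using 3 w by linarith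
    have "colp B (t - 2) = Qp (t - 2 - w)" unfolding colp_def using ge w by simp
    moreover have "Wd B ! t = Qp (t - 2 - w)"
    proof -
      have "\<not> t < length (map (\<lambda>m. Qp (m + 2)) [0..<2] @ B)" using 3 w by simp
      moreover have "t - length (map (\<lambda>m. Qp (m + 2)) [0..<2] @ B) = t - 2 - w" using w by simp
      moreover have "t - 2 - w < 4" using 3 t by linarith
      ultimately show ?thesis unfolding Wd_def nth_append by simp
    qed
    ultimately show ?thesis using e by simp
  qed
qed

lemma colE2:
  assumes w: "length B = w" "2 \<le> w" and n: "n = w + 4 * q" and q: "1 \<le> q" and s: "s \<le> 5"
  shows "colp B ((n - 4 + s) mod n) = Wd2 B ! s"
proof (cases "s < 4")
  case True
  have e: "(n - 4 + s) mod n = n - 4 + s" using True n q by simp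
  have e2: "n - 4 + s - w = s + 4 * (q - 1)" using True n q by simp
  have ge: "\<not> n - 4 + s < length B" using True n q w by simp
  have "colp B (n - 4 + s) = Qp (n - 4 + s - w)" unfolding colp_def using ge w by simp
  also have "\<dots> = Qp s" unfolding e2 Qp_mod by (rule refl)
  finally have "colp B (n - 4 + s) = Qp s" .
  moreover have "Wd2 B ! s = Qp s" unfolding Wd2_def using True by (simp add: nth_append)
  ultimately show ?thesis using e by simp
next
  case False
  have e: "(n - 4 + s) mod n = s - 4" by (rule modhelp) (use False s n q w in simp_all)
  have lt: "s - 4 < length B" using False s w by linarith
  have "colp B (s - 4) = B ! (s - 4)" unfolding colp_def using lt by simp
  moreover have "Wd2 B ! s = B ! (s - 4)"
  proof -
    have "s = 4 \<or> s = 5" using False s by linarith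
    thus ?thesis unfolding Wd2_def by (elim disjE) (simp_all add: nth_append)
  qed
  ultimately show ?thesis using e by simp
qed

lemma colM:
  assumes w: "length B = w" and j: "w + 2 \<le> j" "j + 2 < n" and k: "k < 5"
  shows "colp B ((j + k + n - 2) mod n) = Qp ((j - w - 2) mod 4 + k)"
proof -
  have e: "(j + k + n - 2) mod n = j + k - 2" by (rule modhelp) (use j k in simp_all)
  have ge: "\<not> j + k - 2 < length B" using j w by simp
  have "colp B (j + k - 2) = Qp (j + k - 2 - w)" unfolding colp_def using ge w by simp
  moreover have "j + k - 2 - w = (j - w - 2) + k" using j by simp
  ultimately show ?thesis using e Qp_modk by simp
qed

lemma win_in:
  assumes w: "length B = w" "2 \<le> w" and n: "n = w + 4 * q" and q: "1 \<le> q" and j: "j < n"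
  shows "win B n j \<in> set (allwins B)"
proof -
  consider "j \<le> w + 1" | "n - 2 \<le> j" | "w + 2 \<le> j" "j + 2 < n" by linarith
  then show ?thesis
  proof cases
    case 1
    have "win B n j = map (\<lambda>k. Wd B ! (j + k)) [0..<5]"
      unfolding win_def using colE[OF w(1) n q] 1 by (intro map_cong) simp_all
    moreover have "j \<in> set [0..<length B + 2]" unfolding set_upt atLeastLessThan_iff
      by (rule conjI[OF le0]) (use 1 w in linarith)
    ultimately show ?thesis unfolding allwins_def set_append set_map
      by (intro UnI1) (rule image_eqI[where x = j], simp_all)
  next
    case 2
    show ?thesis
    proof (cases "j = n - 2")
      case True
      have "win B n j = map (\<lambda>k. Wd2 B ! k) [0..<5]"
        unfolding win_def
      proof (intro map_cong refl)
        fix k assume "k \<in> set [0..<5]"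
        then have k: "k < 5" by simp
        have "(j + k + n - 2) mod n = (n - 4 + k) mod n"
          by (rule modhelp2) (use True n q w k in simp)
        thus "colp B ((j + k + n - 2) mod n) = Wd2 B ! k" using colE2[OF w n q, of k] k by simp
      qed
      thus ?thesis unfolding allwins_def by simp
    next
      case False
      then have jj: "j = n - 1" using 2 j by simp
      have "win B n j = map (\<lambda>k. Wd2 B ! (k + 1)) [0..<5]"
        unfolding win_def
      proof (intro map_cong refl)
        fix k assume "k \<in> set [0..<5]"
        then have k: "k < 5" by simp
        have "(j + k + n - 2) mod n = (n - 4 + (k + 1)) mod n"
          by (rule modhelp2) (use jj n q w k in simp)
        thus "colp B ((j + k + n - 2) mod n) = Wd2 B ! (k + 1)" using colE2[OF w n q, of "k + 1"] k by simp
      qed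
      thus ?thesis unfolding allwins_def by simp
    qed
  next
    case 3
    have "win B n j = map (\<lambda>k. Qp ((j - w - 2) mod 4 + k)) [0..<5]"
      unfolding win_def using colM[OF w(1) 3] by (intro map_cong) simp_all
    moreover have "(j - w - 2) mod 4 \<in> set [0..<4]" by simp
    ultimately show ?thesis unfolding allwins_def set_append set_map
      by (intro UnI2) (rule image_eqI[where x = "(j - w - 2) mod 4"], simp_all)
  qed
qed


lemma card_Sc_le: "card (Sc B n) \<le> (\<Sum>j<n. length (colp B j))"
proof -
  have sub: "Sc B n \<subseteq> (\<Union>j\<in>{..<n}. (\<lambda>i. (i, j)) ` set (colp B j))"
    by (auto simp: Sc_def)
  have "card (Sc B n) \<le> card (\<Union>j\<in>{..<n}. (\<lambda>i. (i, j)) ` set (colp B j))"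
    by (rule card_mono[OF _ sub]) simp
  also have "\<dots> \<le> (\<Sum>j<n. card ((\<lambda>i. (i, j)) ` set (colp B j)))"
    by (rule card_UN_le) simp
  also have "\<dots> \<le> (\<Sum>j<n. length (colp B j))"
  proof (rule sum_mono)
    fix j
    have "card ((\<lambda>i. (i, j)) ` set (colp B j)) \<le> card (set (colp B j))" by (rule card_image_le) simp
    also have "\<dots> \<le> length (colp B j)" by (rule card_length)
    finally show "card ((\<lambda>i. (i, j)) ` set (colp B j)) \<le> length (colp B j)" .
  qed
  finally show ?thesis .
qed

lemma sum_split: "(\<Sum>j<w + m. f j) = (\<Sum>j<w. f j) + (\<Sum>j<m. f (w + j))" for f :: "nat \<Rightarrow> nat"
  by (induction m) simp_all

lemma sum_Qp: "(\<Sum>j<4 * q. length (Qp j)) = 4 * q"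
proof (induction q)
  case 0 thus ?case by simp
next
  case (Suc q)
  have "(\<Sum>j<4 * Suc q. length (Qp j)) = (\<Sum>j<4 * q. length (Qp j)) + (\<Sum>j<4. length (Qp (4 * q + j)))"
    using sum_split[where w="4 * q" and m=4 and f="\<lambda>j. length (Qp j)"] by (simp add: add.commute)
  also have "(\<Sum>j<4. length (Qp (4 * q + j))) = (\<Sum>j<4. length (Qp j))"
    by (simp add: Qp_def)
  also have "(\<Sum>j<4. length (Qp j)) = 4"
    by (simp add: lessThan_nat_numeral Qp_def QL_def)
  finally show ?case using Suc by simp
qed

lemma sum_colp:
  assumes "length B = w"
  shows "(\<Sum>j<w + 4 * q. length (colp B j)) = sum_list (map length B) + 4 * q"
proof -
  have "(\<Sum>j<w. length (colp B j)) = (\<Sum>j<w. length (B ! j))"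
    using assms by (intro sum.cong) (simp_all add: colp_def)
  also have "\<dots> = sum_list (map length B)"
    using assms by (simp add: sum_list_sum_nth atLeast0LessThan)
  finally have a: "(\<Sum>j<w. length (colp B j)) = sum_list (map length B)" .
  have b: "(\<Sum>j<4 * q. length (colp B (w + j))) = 4 * q"
    using assms sum_Qp[of q] by (simp add: colp_def)
  show ?thesis using sum_split[where w=w and m="4 * q" and f="\<lambda>j. length (colp B j)"] a b by simp
qed

lemma construction:
  assumes w: "length B = w" "2 \<le> w" and n: "n = w + 4 * q" and q: "1 \<le> q"
    and chk: "list_all goodw (allwins B)"
  shows "disj_dom_set (torus_adj 8 n) (torus_V 8 n) (Sc B n)"
    "card (Sc B n) \<le> sum_list (map length B) + 4 * q"
proof -
  show "disj_dom_set (torus_adj 8 n) (torus_V 8 n) (Sc B n)"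
  proof (rule Sc_dom)
    show "5 \<le> n" using n w q by simp
    fix j assume "j < n"
    then have "win B n j \<in> set (allwins B)" by (rule win_in[OF w n q])
    thus "goodw (win B n j)" using chk by (simp add: list_all_iff)
  qed
  show "card (Sc B n) \<le> sum_list (map length B) + 4 * q"
    using card_Sc_le[of B n] sum_colp[OF w(1), of q] n by simp
qed

definition B0 :: "nat list list" where "B0 = [[0, 4], [], [2, 6], []]"
definition B1 :: "nat list list" where "B1 = [[0, 4], [5], [1], [2, 6], []]"
definition B2 :: "nat list list" where "B2 = [[1, 4, 7], [0], [4], [7], [2, 6], []]"
definition B3 :: "nat list list" where "B3 = [[0, 4], [2], [6], [0, 4], [], [2, 6], []]"

lemma chk0: "list_all goodw (allwins B0)"
  unfolding B0_def by code_simp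
lemma chk1: "list_all goodw (allwins B1)"
  unfolding B1_def by code_simp
lemma chk2: "list_all goodw (allwins B2)"
  unfolding B2_def by code_simp
lemma chk3: "list_all goodw (allwins B3)"
  unfolding B3_def by code_simp


lemma num_le: "disj_dom_set E V S \<Longrightarrow> disj_dom_num E V \<le> card S"
  unfolding disj_dom_num_def by (rule Least_le) blast

lemma num_ge:
  assumes "\<exists>S. disj_dom_set E V S" "\<And>S. disj_dom_set E V S \<Longrightarrow> m \<le> card S"
  shows "m \<le> disj_dom_num E V"
proof -
  obtain S where "disj_dom_set E V S" using assms(1) by blast
  then have "\<exists>k. \<exists>S. disj_dom_set E V S \<and> card S = k" by blast
  then have "\<exists>S. disj_dom_set E V S \<and> card S = disj_dom_num E V"
    unfolding disj_dom_num_def by (rule LeastI_ex)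
  then obtain S' where "disj_dom_set E V S'" "card S' = disj_dom_num E V" by blast
  thus ?thesis using assms(2) by metis
qed

lemma constr_bound:
  assumes "length B = w" "2 \<le> w" "n = w + 4 * q" "1 \<le> q" "list_all goodw (allwins B)"
  shows "disj_dom_num (torus_adj 8 n) (torus_V 8 n) \<le> sum_list (map length B) + 4 * q"
    "\<exists>S. disj_dom_set (torus_adj 8 n) (torus_V 8 n) S"
  using construction[OF assms] num_le[of "torus_adj 8 n" "torus_V 8 n" "Sc B n"] by auto

theorem theorem4:
  fixes n :: nat
  assumes "n \<ge> 8"
  shows "n \<le> disj_dom_num (torus_adj 8 n) (torus_V 8 n)
       \<and> ((n mod 4 = 1 \<or> n mod 4 = 3) \<longrightarrow> disj_dom_num (torus_adj 8 n) (torus_V 8 n) \<le> n + 1)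
       \<and> (n mod 4 = 2 \<longrightarrow> disj_dom_num (torus_adj 8 n) (torus_V 8 n) \<le> n + 2)
       \<and> (n mod 4 = 0 \<longrightarrow> disj_dom_num (torus_adj 8 n) (torus_V 8 n) = n)"
proof -
  let ?D = "disj_dom_num (torus_adj 8 n) (torus_V 8 n)"
  have l0: "length B0 = 4" "sum_list (map length B0) = 4" by (simp_all add: B0_def)
  have l1: "length B1 = 5" "sum_list (map length B1) = 6" by (simp_all add: B1_def)
  have l2: "length B2 = 6" "sum_list (map length B2) = 8" by (simp_all add: B2_def)
  have l3: "length B3 = 7" "sum_list (map length B3) = 8" by (simp_all add: B3_def)
  have c0: "n mod 4 = 0 \<Longrightarrow> ?D \<le> n \<and> (\<exists>S. disj_dom_set (torus_adj 8 n) (torus_V 8 n) S)"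
  proof -
    assume r: "n mod 4 = 0"
    define q where "q = (n - 4) div 4"
    have n: "n = 4 + 4 * q" "1 \<le> q" using r assms unfolding q_def by presburger+
    show ?thesis using constr_bound[OF l0(1) _ n(1) n(2) chk0] l0(2) n by simp
  qed
  have c1: "n mod 4 = 1 \<Longrightarrow> ?D \<le> n + 1 \<and> (\<exists>S. disj_dom_set (torus_adj 8 n) (torus_V 8 n) S)"
  proof -
    assume r: "n mod 4 = 1"
    define q where "q = (n - 5) div 4"
    have n: "n = 5 + 4 * q" "1 \<le> q" using r assms unfolding q_def by presburger+
    show ?thesis using constr_bound[OF l1(1) _ n(1) n(2) chk1] l1(2) n by simp
  qed
  have c2: "n mod 4 = 2 \<Longrightarrow> ?D \<le> n + 2 \<and> (\<exists>S. disj_dom_set (torus_adj 8 n) (torus_V 8 n) S)"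
  proof -
    assume r: "n mod 4 = 2"
    define q where "q = (n - 6) div 4"
    have n: "n = 6 + 4 * q" "1 \<le> q" using r assms unfolding q_def by presburger+
    show ?thesis using constr_bound[OF l2(1) _ n(1) n(2) chk2] l2(2) n by simp
  qed
  have c3: "n mod 4 = 3 \<Longrightarrow> ?D \<le> n + 1 \<and> (\<exists>S. disj_dom_set (torus_adj 8 n) (torus_V 8 n) S)"
  proof -
    assume r: "n mod 4 = 3"
    define q where "q = (n - 7) div 4"
    have n: "n = 7 + 4 * q" "1 \<le> q" using r assms unfolding q_def by presburger+
    show ?thesis using constr_bound[OF l3(1) _ n(1) n(2) chk3] l3(2) n by simp
  qed
  have r4: "n mod 4 = 0 \<or> n mod 4 = 1 \<or> n mod 4 = 2 \<or> n mod 4 = 3" by arith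
  have ex: "\<exists>S. disj_dom_set (torus_adj 8 n) (torus_V 8 n) S"
    using r4
  proof (elim disjE)
    assume "n mod 4 = 0" then have "?D \<le> n + 2 \<and> (\<exists>S. disj_dom_set (torus_adj 8 n) (torus_V 8 n) S)" using c0 by auto
    thus ?thesis by (rule conjunct2)
  next
    assume "n mod 4 = 1" then have "?D \<le> n + 2 \<and> (\<exists>S. disj_dom_set (torus_adj 8 n) (torus_V 8 n) S)" using c1 by auto
    thus ?thesis by (rule conjunct2)
  next
    assume "n mod 4 = 2" then have "?D \<le> n + 2 \<and> (\<exists>S. disj_dom_set (torus_adj 8 n) (torus_V 8 n) S)" using c2 by auto
    thus ?thesis by (rule conjunct2)
  next
    assume "n mod 4 = 3" then have "?D \<le> n + 2 \<and> (\<exists>S. disj_dom_set (torus_adj 8 n) (torus_V 8 n) S)" using c3 by auto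
    thus ?thesis by (rule conjunct2)
  qed
  have lo: "n \<le> ?D"
    by (rule num_ge[OF ex]) (rule lower_bound, assumption, use assms in simp)
  show ?thesis using lo c0 c1 c2 c3 by auto
qed

end
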